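(* Let $q$ be a self-join-free Boolean conjunctive query that has the key-join property. Then for all atoms $F,G\in q$, if $F$ attacks $G$ in the attack graph of $q$, there exists a sequence of atoms $F_0,F_1,\dots,F_\ell$ of $q$ such that $F_0=F$, $F_\ell=G$, and $\mathrm{key}(F_i)\subseteq\mathrm{vars}(F_{i-1})$ for all $i\in\{1,\dots,\ell\}$.
   Context: Every relation name has a signature $[n,k]$ ($1\le k\le n$; primary-key positions $1,\dots,k$) and a mode in $\{\mathsf{c},\mathsf{i}\}$. For an atom $F$, $\mathrm{key}(F)$ is the set of variables at primary-key positions and $\mathrm{vars}(F)$ the set of all its variables. A self-join-free Boolean conjunctive query is a finite set of atoms with pairwise distinct relation names. $q$ has the key-join property if for all $F,G\in q$, either $\mathrm{vars}(F)\cap\mathrm{vars}(G)\in\{\emptyset,\mathrm{key}(F),\mathrm{key}(G)\}$ or $\mathrm{vars}(F)\cap\mathrm{vars}(G)\supseteq\mathrm{key}(F)\cup\mathrm{key}(G)$. Attack graph: $\mathcal{K}(p)=\{\mathrm{key}(F)\to\mathrm{vars}(F)\mid F\in p\}$ (functional dependencies over variables); $q^{\mathsf{c}}$ = atoms of $q$ of mode $\mathsf{c}$; $F^{+,q}$ = set of variables $x$ of $q$ with $\mathcal{K}(q\setminus\{F\})\cup\mathcal{K}(q^{\mathsf{c}})\models\mathrm{key}(F)\to x$. $F$ attacks $G$ ($F\ne G$) iff there are atoms $F_0=F,\dots,F_m=G$ of $q$ and variables $x_i\in(\mathrm{vars}(F_{i-1})\cap\mathrm{vars}(F_i))\setminus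 F^{+,q}$ for $1\le i\le m$. *)

theory Defs
  imports Main
begin

datatype mode = ModeC | ModeI

datatype ('v,'c) qterm = Var 'v | Const 'c

text \<open>An atom is a relation name together with its argument list.
  The schema is given by: arity ar R = n, key length kl R = k (signature [n,k]),
  and mode md R.\<close>
type_synonym ('r,'v,'c) atom = "'r \<times> ('v,'c) qterm list"

definition tvars :: "('v,'c) qterm list \<Rightarrow> 'v set" where
  "tvars ts = {x. Var x \<in> set ts}"

definition vars :: "('r,'v,'c) atom \<Rightarrow> 'v set" where
  "vars F = tvars (snd F)"

definition key :: "('r \<Rightarrow> nat) \<Rightarrow> ('r,'v,'c) atom \<Rightarrow> 'v set" where
  "key kl F = tvars (take (kl (fst F)) (snd F))"

definition wf_atom :: "('r \<Rightarrow> nat) \<Rightarrow> ('r \<Rightarrow> nat) \<Rightarrow> ('r,'v,'c) atom \<Rightarrow> bool" where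
  "wf_atom ar kl F \<longleftrightarrow> 1 \<le> kl (fst F) \<and> kl (fst F) \<le> ar (fst F) \<and> length (snd F) = ar (fst F)"

definition sjf_query :: "('r \<Rightarrow> nat) \<Rightarrow> ('r \<Rightarrow> nat) \<Rightarrow> ('r,'v,'c) atom set \<Rightarrow> bool" where
  "sjf_query ar kl q \<longleftrightarrow> finite q \<and> (\<forall>F\<in>q. wf_atom ar kl F)
     \<and> (\<forall>F\<in>q. \<forall>G\<in>q. fst F = fst G \<longrightarrow> F = G)"

definition key_join_property :: "('r \<Rightarrow> nat) \<Rightarrow> ('r,'v,'c) atom set \<Rightarrow> bool" where
  "key_join_property kl q \<longleftrightarrow> (\<forall>F\<in>q. \<forall>G\<in>q.
     vars F \<inter> vars G \<in> {{}, key kl F, key kl G} \<or>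
     key kl F \<union> key kl G \<subseteq> vars F \<inter> vars G)"

text \<open>Functional dependencies over variables and their (semantic) entailment:
  every relation (set of tuples = valuations of the variables) satisfying all
  dependencies in the set also satisfies the implied one.\<close>
definition fd_sat :: "('v \<Rightarrow> nat) set \<Rightarrow> 'v set \<times> 'v set \<Rightarrow> bool" where
  "fd_sat r fd \<longleftrightarrow> (\<forall>s\<in>r. \<forall>t\<in>r. (\<forall>x\<in>fst fd. s x = t x) \<longrightarrow> (\<forall>y\<in>snd fd. s y = t y))"

definition fd_entails :: "('v set \<times> 'v set) set \<Rightarrow> 'v set \<times> 'v set \<Rightarrow> bool" where
  "fd_entails \<Sigma> fd \<longleftrightarrow> (\<forall>r :: ('v \<Rightarrow> nat) set. (\<forall>d\<in>\<Sigma>. fd_sat r d) \<longrightarrow> fd_sat r fd)"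

definition Kfd :: "('r \<Rightarrow> nat) \<Rightarrow> ('r,'v,'c) atom set \<Rightarrow> ('v set \<times> 'v set) set" where
  "Kfd kl p = {(key kl F, vars F) | F. F \<in> p}"

definition qvars :: "('r,'v,'c) atom set \<Rightarrow> 'v set" where
  "qvars q = (\<Union>F\<in>q. vars F)"

definition cpart :: "('r \<Rightarrow> mode) \<Rightarrow> ('r,'v,'c) atom set \<Rightarrow> ('r,'v,'c) atom set" where
  "cpart md q = {F\<in>q. md (fst F) = ModeC}"

definition Fplus :: "('r \<Rightarrow> nat) \<Rightarrow> ('r \<Rightarrow> mode) \<Rightarrow> ('r,'v,'c) atom set \<Rightarrow> ('r,'v,'c) atom \<Rightarrow> 'v set" where
  "Fplus kl md q F = {x\<in>qvars q. fd_entails (Kfd kl (q - {F}) \<union> Kfd kl (cpart md q)) (key kl F, {x})}"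

definition attacks :: "('r \<Rightarrow> nat) \<Rightarrow> ('r \<Rightarrow> mode) \<Rightarrow> ('r,'v,'c) atom set \<Rightarrow> ('r,'v,'c) atom \<Rightarrow> ('r,'v,'c) atom \<Rightarrow> bool" where
  "attacks kl md q F G \<longleftrightarrow> F \<noteq> G \<and> (\<exists>path. path \<noteq> [] \<and> hd path = F \<and> last path = G \<and> set path \<subseteq> q \<and>
     (\<forall>i. Suc i < length path \<longrightarrow>
        (\<exists>x. x \<in> (vars (path ! i) \<inter> vars (path ! Suc i)) - Fplus kl md q F)))"

end

theory Submission
  imports Defs
begin

inductive kreach :: "('r \<Rightarrow> nat) \<Rightarrow> ('r,'v,'c) atom set \<Rightarrow> ('r,'v,'c) atom \<Rightarrow> ('r,'v,'c) atom \<Rightarrow> bool"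
  for kl q F where
  base: "kreach kl q F F"
| step: "kreach kl q F H \<Longrightarrow> H' \<in> q \<Longrightarrow> key kl H' \<subseteq> vars H \<Longrightarrow> kreach kl q F H'"

lemma kreach_in: "kreach kl q F H \<Longrightarrow> F \<in> q \<Longrightarrow> H \<in> q"
  by (induction rule: kreach.induct) auto


lemma kjp_cases:
  assumes "key_join_property kl q" "H \<in> q" "G \<in> q" "x \<in> vars H" "x \<in> vars G"
  shows "key kl G \<subseteq> vars H \<or> x \<in> key kl H"
proof -
  have d: "vars H \<inter> vars G = {} \<or> vars H \<inter> vars G = key kl H \<or> vars H \<inter> vars G = key kl G \<or>
     key kl H \<union> key kl G \<subseteq> vars H \<inter> vars G"
    using assms(1,2,3) unfolding key_join_property_def by simp
  have x: "x \<in> vars H \<inter> vars G" using assms(4,5) by simp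
  from d show ?thesis
  proof (elim disjE)
    assume "vars H \<inter> vars G = {}" then show ?thesis using x by simp
  next
    assume "vars H \<inter> vars G = key kl H" then show ?thesis using x by simp
  next
    assume e: "vars H \<inter> vars G = key kl G"
    have "key kl G \<subseteq> vars H" unfolding e[symmetric] by (rule Int_lower1)
    then show ?thesis by simp
  next
    assume "key kl H \<union> key kl G \<subseteq> vars H \<inter> vars G" then show ?thesis by blast
  qed
qed

lemma kreach_ext:
  assumes "kreach kl q F H" "F \<in> q" "key_join_property kl q"
    and "x \<in> vars H" "x \<in> vars G" "G \<in> q" "x \<notin> key kl F"
  shows "kreach kl q F G"
  using assms(1,4)
proof (induction rule: kreach.induct)
  case base
  have "key kl G \<subseteq> vars F \<or> x \<in> key kl F"
    by (rule kjp_cases[OF assms(3,2,6) base assms(5)])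
  then have "key kl G \<subseteq> vars F" using assms(7) by simp
  then show ?case using kreach.step[OF kreach.base assms(6)] by simp
next
  case (step H H')
  have "key kl G \<subseteq> vars H' \<or> x \<in> key kl H'"
    by (rule kjp_cases[OF assms(3) step(2) assms(6) step(5) assms(5)])
  then show ?case
  proof
    assume "key kl G \<subseteq> vars H'"
    then show ?thesis using kreach.step[OF kreach.step[OF step(1,2,3)] assms(6)] by simp
  next
    assume "x \<in> key kl H'"
    then have "x \<in> vars H" using step(3) by blast
    then show ?thesis by (rule step(4))
  qed
qed
lemma kreach_path:
  "kreach kl q F H \<Longrightarrow> F \<in> q \<Longrightarrow> \<exists>path. path \<noteq> [] \<and> hd path = F \<and> last path = H \<and> set path \<subseteq> q \<and>
     (\<forall>i. Suc i < length path \<longrightarrow> key kl (path ! Suc i) \<subseteq> vars (path ! i))"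
proof (induction rule: kreach.induct)
  case base
  then show ?case by (intro exI[of _ "[F]"]) auto
next
  case (step H H')
  then obtain p where p: "p \<noteq> []" "hd p = F" "last p = H" "set p \<subseteq> q"
    "\<forall>i. Suc i < length p \<longrightarrow> key kl (p ! Suc i) \<subseteq> vars (p ! i)" by blast
  show ?case
  proof (intro exI[of _ "p @ [H']"] conjI allI impI)
    fix i assume i: "Suc i < length (p @ [H'])"
    show "key kl ((p @ [H']) ! Suc i) \<subseteq> vars ((p @ [H']) ! i)"
    proof (cases "Suc i < length p")
      case True
      then show ?thesis using p(5) by (simp add: nth_append)
    next
      case False
      then have "Suc i = length p" using i by simp
      then have "i = length p - 1" by simp
      then have "p ! i = H" using p(1,3) by (simp add: last_conv_nth)
      then show ?thesis using \<open>Suc i = length p\<close> step(3) by (simp add: nth_append)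
    qed
  qed (use p step in auto)
qed

lemma key_in_Fplus:
  assumes "F \<in> q" "x \<in> key kl F"
  shows "x \<in> Fplus kl md q F"
proof -
  have "key kl F \<subseteq> vars F" unfolding key_def vars_def tvars_def
    using set_take_subset by fastforce
  then have "x \<in> qvars q" using assms unfolding qvars_def by blast
  moreover have "fd_entails S (key kl F, {x})" for S
    using assms(2) unfolding fd_entails_def fd_sat_def by auto
  ultimately show ?thesis unfolding Fplus_def by blast
qed

theorem lemma34:
  fixes ar kl :: "'r \<Rightarrow> nat" and md :: "'r \<Rightarrow> mode" and q :: "('r,'v,'c) atom set"
  assumes "sjf_query ar kl q"
    and "key_join_property kl q"
    and "F \<in> q" and "G \<in> q"
    and "attacks kl md q F G"
  shows "\<exists>path. path \<noteq> [] \<and> hd path = F \<and> last path = G \<and> set path \<subseteq> q \<and>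
     (\<forall>i. Suc i < length path \<longrightarrow> key kl (path ! Suc i) \<subseteq> vars (path ! i))"
proof -
  obtain p where p: "p \<noteq> []" "hd p = F" "last p = G" "set p \<subseteq> q"
     "\<forall>i. Suc i < length p \<longrightarrow>
        (\<exists>x. x \<in> (vars (p ! i) \<inter> vars (p ! Suc i)) - Fplus kl md q F)"
    using assms(5) unfolding attacks_def by blast
  have "i < length p \<Longrightarrow> kreach kl q F (p ! i)" for i
  proof (induction i)
    case 0
    then show ?case using p(1,2) by (simp add: hd_conv_nth[symmetric] kreach.base)
  next
    case (Suc i)
    then obtain x where x: "x \<in> vars (p ! i)" "x \<in> vars (p ! Suc i)" "x \<notin> Fplus kl md q F"
      using p(5) by blast
    have "x \<notin> key kl F" using x(3) key_in_Fplus assms(3) by metis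
    moreover have "p ! Suc i \<in> q" using Suc(2) p(4) nth_mem by blast
    ultimately show ?case using kreach_ext[OF _ assms(3) assms(2) x(1) x(2)] Suc.IH Suc.prems by simp
  qed
  moreover have "G = p ! (length p - 1)" using p(1,3) by (simp add: last_conv_nth)
  moreover have "length p - 1 < length p" using p(1) by simp
  ultimately have "kreach kl q F G" by metis
  then show ?thesis using kreach_path assms(3) by blast
qed

end
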